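(* Assume $P_{XY}\in\mathcal{H}_{XY}$. Let $\Omega_u=\{\omega_1<\dots<\omega_{|\mathcal{X}|}\}\subset\{1,\dots,|\mathcal{Y}|\}$ with $M_{\Omega_u}$ invertible, and let $J_u\in\mathbb{R}^{|\mathcal{X}|}$ with $\sum_xJ_u(x)=0$ and $\sum_x|J_u(x)|\le1$. For $\epsilon>0$ let $V^*_{\Omega_u}\in\mathbb{R}^{|\mathcal{Y}|}$ be defined by $V^*_{\Omega_u}(\omega_i)=\left(M_{\Omega_u}^{-1}MP_Y+\epsilon M_{\Omega_u}^{-1}M\begin{bmatrix}P_{X|Y_1}^{-1}J_u\\0\end{bmatrix}\right)(i)$ for $1\le i\le|\mathcal{X}|$ and $V^*_{\Omega_u}(j)=0$ for $j\notin\Omega_u$, and suppose $V^*_{\Omega_u}$ is an extreme point of $\mathbb{S}_u$ for all sufficiently small $\epsilon>0$. Then, for $P_{Y|U=u}=V^*_{\Omega_u}$, as $\epsilon\to0^+$, $$H(P_{Y|U=u})=-\sum_{y=1}^{|\mathcal{Y}|}P_{Y|U=u}(y)\log P_{Y|U=u}(y)=-(b_u+\epsilon a_uJ_u)+o(\epsilon),$$ where $l_u=\left[\log\left((M_{\Omega_u}^{-1}MP_Y)(i)\right)\right]_{i=1,\dots,|\mathcal{X}|}\in\mathbb{R}^{1\times|\mathcal{X}|}$, $b_u=l_u\left(M_{\Omega_u}^{-1}MP_Y\right)$, and $a_u=l_u\left(M_{\Omega_u}^{-1}M(1\!:\!|\mathcal{X}|)P_{X|Y_1}^{-1}\right)\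in\mathbb{R}^{1\times|\mathcal{X}|}$.
   Context: Setting: $X,Y$ on finite alphabets with $|\mathcal{X}|<|\mathcal{Y}|$, joint pmf $P_{XY}$, marginal vectors $P_X,P_Y$ with positive entries. $P_{X|Y}\in\mathbb{R}^{|\mathcal{X}|\times|\mathcal{Y}|}$ has full row rank and $P_{X|Y}=[P_{X|Y_1},P_{X|Y_2}]$ with $P_{X|Y_1}$ (first $|\mathcal{X}|$ columns) invertible. With an SVD $P_{X|Y}=U\Sigma V^T$, $V=[v_1,\dots,v_{|\mathcal{Y}|}]$, set $M=[v_1,\dots,v_{|\mathcal{X}|}]^T$; $M_\Omega$ is the submatrix of $M$ with columns indexed by $\Omega$ and $M(1\!:\!|\mathcal{X}|)$ the submatrix of its first $|\mathcal{X}|$ columns. The zero block has size $|\mathcal{Y}|-|\mathcal{X}|$. $\mathbb{S}_u=\{y\in\mathbb{R}^{|\mathcal{Y}|}: My=MP_Y+\epsilon M\begin{bmatrix}P_{X|Y_1}^{-1}J_u\\0\end{bmatrix},\ y\ge0\}$. $\mathcal{H}_{XY}$ is the set of joint distributions $P_{XY}$ such that for every $\Omega\subset\{1,\dots,|\mathcal{Y}|\}$ with $|\Omega|=|\mathcal{X}|$ and $M_\Omega$ invertible, if $t_\Omega=M_\Omega^{-1}MP_Y$ lies in the probability simplex $\{x\in\mathbb{R}^{|\mathcal{X}|}_{\ge0}:\mathbf{1}^Tx=1\}$ then all entries of $t_\Omega$ are strictly positive. Convention $0\log0=0$. *)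

theory Defs
  imports "Jordan_Normal_Form.DL_Rank_Submatrix" "HOL-Library.Landau_Symbols"
begin

text \<open>Alphabets are {0..<n} (for X) and {0..<m} (for Y); a joint pmf is an n x m matrix.\<close>

definition marg_X :: "nat \<Rightarrow> nat \<Rightarrow> real mat \<Rightarrow> real vec" where
  "marg_X n m P = vec n (\<lambda>x. \<Sum>y<m. P $$ (x, y))"

definition marg_Y :: "nat \<Rightarrow> nat \<Rightarrow> real mat \<Rightarrow> real vec" where
  "marg_Y n m P = vec m (\<lambda>y. \<Sum>x<n. P $$ (x, y))"

definition cond_XY :: "nat \<Rightarrow> nat \<Rightarrow> real mat \<Rightarrow> real mat" where
  "cond_XY n m P = mat n m (\<lambda>(x, y). P $$ (x, y) / (marg_Y n m P) $ y)"

definition is_svd :: "nat \<Rightarrow> nat \<Rightarrow> real mat \<Rightarrow> real mat \<Rightarrow> real mat \<Rightarrow> real mat \<Rightarrow> bool" where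
  "is_svd n m A U S V \<longleftrightarrow>
     U \<in> carrier_mat n n \<and> S \<in> carrier_mat n m \<and> V \<in> carrier_mat m m \<and>
     U * transpose_mat U = 1\<^sub>m n \<and> transpose_mat U * U = 1\<^sub>m n \<and>
     V * transpose_mat V = 1\<^sub>m m \<and> transpose_mat V * V = 1\<^sub>m m \<and>
     (\<forall>i<n. \<forall>j<m. i \<noteq> j \<longrightarrow> S $$ (i, j) = 0) \<and>
     (\<forall>i<min n m. 0 \<le> S $$ (i, i)) \<and>
     (\<forall>i j. i \<le> j \<and> j < min n m \<longrightarrow> S $$ (j, j) \<le> S $$ (i, i)) \<and>
     A = U * S * transpose_mat V"

text \<open>M = [v_1, ..., v_n]^T, the first n columns of V, transposed (n x m).\<close>
definition M_of_V :: "nat \<Rightarrow> nat \<Rightarrow> real mat \<Rightarrow> real mat" where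
  "M_of_V n m V = mat n m (\<lambda>(i, j). V $$ (j, i))"

definition mat_inv :: "real mat \<Rightarrow> real mat" where
  "mat_inv A = (SOME B. B \<in> carrier_mat (dim_row A) (dim_row A) \<and> inverts_mat A B \<and> inverts_mat B A)"

text \<open>Submatrix consisting of the columns indexed by Omega (in increasing order).\<close>
definition col_sub :: "real mat \<Rightarrow> nat set \<Rightarrow> real mat" where
  "col_sub A \<Omega> = submatrix A UNIV \<Omega>"

definition in_simplex :: "nat \<Rightarrow> real vec \<Rightarrow> bool" where
  "in_simplex n x \<longleftrightarrow> x \<in> carrier_vec n \<and> (\<forall>i<n. 0 \<le> x $ i) \<and> (\<Sum>i<n. x $ i) = 1"

definition in_H :: "nat \<Rightarrow> nat \<Rightarrow> real mat \<Rightarrow> real mat \<Rightarrow> bool" where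
  "in_H n m P M \<longleftrightarrow>
     (\<forall>\<Omega>. \<Omega> \<subseteq> {..<m} \<and> card \<Omega> = n \<and> invertible_mat (col_sub M \<Omega>) \<longrightarrow>
        (let t = mat_inv (col_sub M \<Omega>) *\<^sub>v (M *\<^sub>v marg_Y n m P) in
          in_simplex n t \<longrightarrow> (\<forall>i<n. 0 < t $ i)))"

text \<open>Vector in R^m with entry w(i) at position omega_i (i-th smallest element of Omega), 0 elsewhere.\<close>
definition embed_on :: "nat \<Rightarrow> nat set \<Rightarrow> real vec \<Rightarrow> real vec" where
  "embed_on m \<Omega> w = vec m (\<lambda>j. if j \<in> \<Omega> then w $ card {k \<in> \<Omega>. k < j} else 0)"

definition extreme_pt :: "real vec set \<Rightarrow> real vec \<Rightarrow> bool" where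
  "extreme_pt S y \<longleftrightarrow> y \<in> S \<and>
     (\<forall>a\<in>S. \<forall>b\<in>S. \<forall>t::real. 0 < t \<and> t < 1 \<and> y = t \<cdot>\<^sub>v a + (1 - t) \<cdot>\<^sub>v b \<longrightarrow> a = b)"

definition entropy :: "real vec \<Rightarrow> real" where
  "entropy p = - (\<Sum>y<dim_vec p. if p $ y = 0 then 0 else p $ y * ln (p $ y))"

end

theory Submission
  imports Defs
begin


lemma bij_pick:
  assumes "finite \<Omega>" "card \<Omega> = n"
  shows "bij_betw (pick \<Omega>) {..<n} \<Omega>"
proof (rule bij_betw_byWitness[where f' = "\<lambda>j. card {k\<in>\<Omega>. k < j}"])
  show "\<forall>a\<in>{..<n}. card {k \<in> \<Omega>. k < pick \<Omega> a} = a" using assms card_pick_le by auto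
  show "\<forall>a'\<in>\<Omega>. pick \<Omega> (card {k \<in> \<Omega>. k < a'}) = a'" using pick_card_in_set by auto
  show "pick \<Omega> ` {..<n} \<subseteq> \<Omega>" using assms pick_in_set_le by auto
  show "(\<lambda>j. card {k \<in> \<Omega>. k < j}) ` \<Omega> \<subseteq> {..<n}"
  proof
    fix x assume "x \<in> (\<lambda>j. card {k \<in> \<Omega>. k < j}) ` \<Omega>"
    then obtain j where j: "j \<in> \<Omega>" "x = card {k \<in> \<Omega>. k < j}" by auto
    have "{k \<in> \<Omega>. k < j} \<subset> \<Omega>" using j by auto
    then have "card {k \<in> \<Omega>. k < j} < card \<Omega>" using assms psubset_card_mono by blast
    then show "x \<in> {..<n}" using j assms by auto
  qed
qed

lemma sum_embed:
  fixes g :: "nat \<Rightarrow> nat \<Rightarrow> 'a::comm_monoid_add"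
  assumes "\<Omega> \<subseteq> {..<m}" "card \<Omega> = n"
  shows "(\<Sum>j<m. if j \<in> \<Omega> then g j (card {k\<in>\<Omega>. k < j}) else 0) = (\<Sum>i<n. g (pick \<Omega> i) i)"
proof -
  have fin: "finite \<Omega>" using assms finite_subset by blast
  have "(\<Sum>j<m. if j \<in> \<Omega> then g j (card {k\<in>\<Omega>. k < j}) else 0) = (\<Sum>j\<in>\<Omega>. g j (card {k\<in>\<Omega>. k < j}))"
    using assms(1) by (simp add: sum.If_cases Int_absorb1 inf.absorb2)
  also have "\<dots> = (\<Sum>i<n. g (pick \<Omega> i) (card {k\<in>\<Omega>. k < pick \<Omega> i}))"
    using sum.reindex_bij_betw[OF bij_pick[OF fin assms(2)], symmetric] by simp
  also have "\<dots> = (\<Sum>i<n. g (pick \<Omega> i) i)"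
    using card_pick_le assms by (intro sum.cong) auto
  finally show ?thesis .
qed

lemma embed_pick:
  assumes "\<Omega> \<subseteq> {..<m}" "card \<Omega> = n" "i < n"
  shows "embed_on m \<Omega> w $ pick \<Omega> i = w $ i" "pick \<Omega> i < m" "pick \<Omega> i \<in> \<Omega>"
proof -
  have p: "pick \<Omega> i \<in> \<Omega>" using assms pick_in_set_le by auto
  then show "pick \<Omega> i < m" "pick \<Omega> i \<in> \<Omega>" using assms by auto
  then show "embed_on m \<Omega> w $ pick \<Omega> i = w $ i" using p assms card_pick_le unfolding embed_on_def by auto
qed

lemma sum_embed_vec:
  assumes "\<Omega> \<subseteq> {..<m}" "card \<Omega> = n"
  shows "(\<Sum>j<m. embed_on m \<Omega> w $ j) = (\<Sum>i<n. w $ i)"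
  using sum_embed[OF assms, of "\<lambda>j i. w $ i"] unfolding embed_on_def by simp

lemma entropy_embed:
  assumes "\<Omega> \<subseteq> {..<m}" "card \<Omega> = n"
  shows "entropy (embed_on m \<Omega> w) = - (\<Sum>i<n. if w $ i = 0 then 0 else w $ i * ln (w $ i))"
proof -
  have "(\<Sum>y<m. if embed_on m \<Omega> w $ y = 0 then 0 else embed_on m \<Omega> w $ y * ln (embed_on m \<Omega> w $ y))
     = (\<Sum>j<m. if j \<in> \<Omega> then (\<lambda>j i. if w $ i = 0 then 0 else w $ i * ln (w $ i)) j (card {k\<in>\<Omega>. k < j}) else 0)"
    unfolding embed_on_def by (intro sum.cong) auto
  also have "\<dots> = (\<Sum>i<n. if w $ i = 0 then 0 else w $ i * ln (w $ i))"
    by (subst sum_embed[OF assms]) simp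
  finally show ?thesis unfolding entropy_def embed_on_def by simp
qed



lemma coord_lim:
  fixes a b :: real
  assumes "0 < a"
  shows "((\<lambda>\<epsilon>. (- ((a + \<epsilon> * b) * ln (a + \<epsilon> * b)) + a * ln a + \<epsilon> * b * ln a + \<epsilon> * b) / \<epsilon>) \<longlongrightarrow> 0) (at_right 0)"
proof -
  define F where "F = (\<lambda>x::real. (a + x * b) * ln (a + x * b))"
  have D: "(F has_field_derivative (b * ln a + b)) (at 0)"
    unfolding F_def using assms
    by (auto intro!: derivative_eq_intros simp: field_simps)
  then have "((\<lambda>y. (F y - F 0) / (y - 0)) \<longlongrightarrow> b * ln a + b) (at 0)"
    using has_field_derivative_iff by blast
  then have L: "((\<lambda>y. (F y - F 0) / (y - 0)) \<longlongrightarrow> b * ln a + b) (at_right 0)"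
    by (rule tendsto_mono[OF at_le[OF subset_UNIV]])
  have "((\<lambda>y. - ((F y - F 0) / (y - 0)) + (b * ln a + b)) \<longlongrightarrow> - (b * ln a + b) + (b * ln a + b)) (at_right 0)"
    by (intro tendsto_intros L)
  then have L2: "((\<lambda>y. - ((F y - F 0) / (y - 0)) + (b * ln a + b)) \<longlongrightarrow> 0) (at_right 0)" by simp
  show ?thesis
  proof (rule Lim_transform_eventually[OF L2])
    show "\<forall>\<^sub>F x in at_right 0. - ((F x - F 0) / (x - 0)) + (b * ln a + b) =
        (- ((a + x * b) * ln (a + x * b)) + a * ln a + x * b * ln a + x * b) / x"
      using eventually_at_right_less[of 0]
      by eventually_elim (simp add: F_def field_simps)
  qed
qed



lemma core:
  fixes t0 d :: "real vec"
  assumes t0: "t0 \<in> carrier_vec n" and d: "d \<in> carrier_vec n" and pos: "\<forall>i<n. 0 < t0 $ i"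
    and sd: "(\<Sum>i<n. d $ i) = 0" and \<Omega>: "\<Omega> \<subseteq> {..<m}" "card \<Omega> = n"
  shows "(\<lambda>\<epsilon>. entropy (embed_on m \<Omega> (t0 + \<epsilon> \<cdot>\<^sub>v d))
      + (vec n (\<lambda>i. ln (t0 $ i)) \<bullet> t0 + \<epsilon> * (vec n (\<lambda>i. ln (t0 $ i)) \<bullet> d))) \<in> o[at_right 0](\<lambda>\<epsilon>. \<epsilon>)"
proof (rule smalloI_tendsto)
  define h where "h = (\<lambda>i \<epsilon>. (- ((t0$i + \<epsilon> * d$i) * ln (t0$i + \<epsilon> * d$i)) + t0$i * ln (t0$i) + \<epsilon> * d$i * ln (t0$i) + \<epsilon> * d$i) / \<epsilon>)"
  have ev: "\<forall>\<^sub>F \<epsilon> in at_right 0. \<forall>i\<in>{..<n}. 0 < t0$i + \<epsilon> * d$i"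
  proof (rule eventually_ball_finite, simp, intro ballI)
    fix i assume i: "i \<in> {..<n}"
    have "((\<lambda>\<epsilon>::real. t0$i + \<epsilon> * d$i) \<longlongrightarrow> t0$i + 0 * d$i) (at_right 0)"
      by (intro tendsto_intros)
    then show "\<forall>\<^sub>F \<epsilon> in at_right 0. 0 < t0$i + \<epsilon> * d$i"
      using pos i by (intro order_tendstoD) auto
  qed
  have lim: "((\<lambda>\<epsilon>. \<Sum>i<n. h i \<epsilon>) \<longlongrightarrow> 0) (at_right 0)"
    using tendsto_sum[of "{..<n}" "\<lambda>i. h i" "\<lambda>i. 0" "at_right 0"] coord_lim pos
    unfolding h_def by simp
  show "((\<lambda>\<epsilon>. (entropy (embed_on m \<Omega> (t0 + \<epsilon> \<cdot>\<^sub>v d))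
      + (vec n (\<lambda>i. ln (t0 $ i)) \<bullet> t0 + \<epsilon> * (vec n (\<lambda>i. ln (t0 $ i)) \<bullet> d))) / \<epsilon>) \<longlongrightarrow> 0) (at_right 0)"
  proof (rule Lim_transform_eventually[OF lim])
    show "\<forall>\<^sub>F \<epsilon> in at_right 0. (\<Sum>i<n. h i \<epsilon>) = (entropy (embed_on m \<Omega> (t0 + \<epsilon> \<cdot>\<^sub>v d))
      + (vec n (\<lambda>i. ln (t0 $ i)) \<bullet> t0 + \<epsilon> * (vec n (\<lambda>i. ln (t0 $ i)) \<bullet> d))) / \<epsilon>"
      using ev eventually_at_right_less[of 0]
    proof eventually_elim
      case (elim \<epsilon>)
      have E: "entropy (embed_on m \<Omega> (t0 + \<epsilon> \<cdot>\<^sub>v d)) = - (\<Sum>i<n. (t0$i + \<epsilon> * d$i) * ln (t0$i + \<epsilon> * d$i))"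
        unfolding entropy_embed[OF \<Omega>] using elim t0 d by (intro arg_cong[where f=uminus] sum.cong) auto
      have S1: "vec n (\<lambda>i. ln (t0 $ i)) \<bullet> t0 = (\<Sum>i<n. t0$i * ln (t0$i))"
        using t0 unfolding scalar_prod_def by (auto simp: lessThan_atLeast0 mult.commute intro!: sum.cong)
      have S2: "vec n (\<lambda>i. ln (t0 $ i)) \<bullet> d = (\<Sum>i<n. d$i * ln (t0$i))"
        using d unfolding scalar_prod_def by (auto simp: lessThan_atLeast0 mult.commute intro!: sum.cong)
      have "(\<Sum>i<n. h i \<epsilon>) = (\<Sum>i<n. (- ((t0$i + \<epsilon> * d$i) * ln (t0$i + \<epsilon> * d$i)) + t0$i * ln (t0$i) + \<epsilon> * (d$i * ln (t0$i)) + \<epsilon> * d$i)) / \<epsilon>"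
        unfolding h_def by (simp add: sum_divide_distrib algebra_simps)
      also have "\<dots> = (- (\<Sum>i<n. (t0$i + \<epsilon> * d$i) * ln (t0$i + \<epsilon> * d$i)) + (\<Sum>i<n. t0$i * ln (t0$i)) + \<epsilon> * (\<Sum>i<n. d$i * ln (t0$i)) + \<epsilon> * (\<Sum>i<n. d$i)) / \<epsilon>"
        by (simp add: sum.distrib sum_negf sum_distrib_left sum_subtractf)
      finally show ?case using E S1 S2 sd by simp
    qed
  qed
  show "\<forall>\<^sub>F \<epsilon> in at_right 0. (\<epsilon>::real) \<noteq> 0"
    using eventually_at_right_less[of 0] by eventually_elim simp
qed



lemma mat_inv_props:
  assumes "invertible_mat A" "A \<in> carrier_mat n n"
  shows "mat_inv A \<in> carrier_mat n n" "A * mat_inv A = 1\<^sub>m n" "mat_inv A * A = 1\<^sub>m n"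
proof -
  obtain B where B: "inverts_mat A B" "inverts_mat B A" using assms unfolding invertible_mat_def by auto
  have "dim_col (A * B) = dim_col (1\<^sub>m (dim_row A) :: real mat)" using B unfolding inverts_mat_def by simp
  then have c: "dim_col B = n" using assms by simp
  have "dim_col (B * A) = dim_col (1\<^sub>m (dim_row B) :: real mat)" using B unfolding inverts_mat_def by simp
  then have r: "dim_row B = n" using assms by simp
  have "B \<in> carrier_mat n n" using c r by auto
  then have ex: "\<exists>B. B \<in> carrier_mat (dim_row A) (dim_row A) \<and> inverts_mat A B \<and> inverts_mat B A"
    using B assms by auto
  have "mat_inv A \<in> carrier_mat (dim_row A) (dim_row A) \<and> inverts_mat A (mat_inv A) \<and> inverts_mat (mat_inv A) A"
    unfolding mat_inv_def by (rule someI_ex[OF ex])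
  then show "mat_inv A \<in> carrier_mat n n" "A * mat_inv A = 1\<^sub>m n" "mat_inv A * A = 1\<^sub>m n"
    using assms unfolding inverts_mat_def by auto
qed

lemma col_sub_carrier:
  assumes "A \<in> carrier_mat n m" "\<Omega> \<subseteq> {..<m}" "card \<Omega> = k"
  shows "col_sub A \<Omega> \<in> carrier_mat n k"
proof -
  have "{j. j < m \<and> j \<in> \<Omega>} = \<Omega>" using assms by auto
  then show ?thesis using assms unfolding col_sub_def submatrix_def by auto
qed

lemma col_sub_index:
  assumes "A \<in> carrier_mat n m" "\<Omega> \<subseteq> {..<m}" "card \<Omega> = k" "i < n" "j < k"
  shows "col_sub A \<Omega> $$ (i, j) = A $$ (i, pick \<Omega> j)"
proof -
  have "{j. j < m \<and> j \<in> \<Omega>} = \<Omega>" using assms by auto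
  then show ?thesis using assms unfolding col_sub_def submatrix_def by (auto simp: pick_UNIV)
qed

lemma pick_lessThan: "j < n \<Longrightarrow> pick {..<n} j = j"
proof -
  assume j: "j < n"
  have e: "{a. a < n \<and> a \<in> UNIV} = {..<n}" by auto
  have "pick UNIV j = pick {a. a < n \<and> a \<in> UNIV} j"
    by (rule pick_reduce_set) (use j e in simp)
  then show ?thesis using pick_UNIV e by simp
qed



lemma ones_rowspace:
  fixes A U S V :: "real mat"
  assumes svd: "is_svd n m A U S V" and nm: "n < m"
    and cs: "\<forall>j<m. (\<Sum>i<n. A $$ (i, j)) = 1"
  shows "\<exists>c \<in> carrier_vec n. \<forall>y \<in> carrier_vec m. (\<Sum>j<m. y $ j) = c \<bullet> (M_of_V n m V *\<^sub>v y)"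
proof -
  have U: "U \<in> carrier_mat n n" and S: "S \<in> carrier_mat n m" and V: "V \<in> carrier_mat m m"
    and diag: "\<forall>i<n. \<forall>j<m. i \<noteq> j \<longrightarrow> S $$ (i, j) = 0"
    and A: "A = U * S * transpose_mat V" using svd unfolding is_svd_def by auto
  have US: "(U * S) $$ (i, l) = (if l < n then U $$ (i, l) * S $$ (l, l) else 0)" if "i < n" "l < m" for i l
  proof -
    have "(U * S) $$ (i, l) = (\<Sum>k<n. U $$ (i, k) * S $$ (k, l))"
      using U S that by (simp add: scalar_prod_def lessThan_atLeast0)
    also have "\<dots> = (\<Sum>k<n. if k = l then U $$ (i, l) * S $$ (l, l) else 0)"
      using diag that by (intro sum.cong) auto
    also have "\<dots> = (if l < n then U $$ (i, l) * S $$ (l, l) else 0)" by (simp add: sum.delta)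
    finally show ?thesis .
  qed
  have Aij: "A $$ (i, j) = (\<Sum>l<n. U $$ (i, l) * S $$ (l, l) * V $$ (j, l))" if "i < n" "j < m" for i j
  proof -
    have "A $$ (i, j) = row (U * S) i \<bullet> col (transpose_mat V) j"
      unfolding A using U S V that by (intro index_mult_mat(1)) auto
    also have "\<dots> = (\<Sum>l\<in>{0..<m}. row (U * S) i $ l * col (transpose_mat V) j $ l)"
      unfolding scalar_prod_def using V by simp
    also have "\<dots> = (\<Sum>l<m. (U * S) $$ (i, l) * V $$ (j, l))"
      unfolding lessThan_atLeast0
    proof (rule sum.cong[OF refl])
      fix l assume l: "l \<in> {0..<m}"
      have "row (U * S) i $ l = (U * S) $$ (i, l)" using l S U that by (intro index_row(1)) auto
      moreover have "col (transpose_mat V) j $ l = V $$ (j, l)" using l V that by simp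
      ultimately show "row (U * S) i $ l * col (transpose_mat V) j $ l = (U * S) $$ (i, l) * V $$ (j, l)" by simp
    qed
    also have "\<dots> = (\<Sum>l<m. if l < n then U $$ (i, l) * S $$ (l, l) * V $$ (j, l) else 0)"
      using US that by (intro sum.cong) auto
    also have "\<dots> = (\<Sum>l\<in>{..<m} \<inter> {l. l < n}. U $$ (i, l) * S $$ (l, l) * V $$ (j, l))"
      by (simp add: sum.inter_restrict)
    also have "{..<m} \<inter> {l. l < n} = {..<n}" using nm by auto
    finally show ?thesis .
  qed
  define c where "c = vec n (\<lambda>l. S $$ (l, l) * (\<Sum>i<n. U $$ (i, l)))"
  have cM: "(\<Sum>l<n. c $ l * M_of_V n m V $$ (l, j)) = 1" if "j < m" for j
  proof -
    have "(\<Sum>l<n. c $ l * M_of_V n m V $$ (l, j)) = (\<Sum>l<n. \<Sum>i<n. U $$ (i, l) * S $$ (l, l) * V $$ (j, l))"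
      unfolding c_def M_of_V_def using that by (auto simp: sum_distrib_left sum_distrib_right intro!: sum.cong)
    also have "\<dots> = (\<Sum>i<n. \<Sum>l<n. U $$ (i, l) * S $$ (l, l) * V $$ (j, l))" by (rule sum.swap)
    also have "\<dots> = (\<Sum>i<n. A $$ (i, j))" using Aij that by simp
    finally show ?thesis using cs that by simp
  qed
  show ?thesis
  proof (intro bexI ballI)
    show "c \<in> carrier_vec n" unfolding c_def by simp
    fix y :: "real vec" assume y: "y \<in> carrier_vec m"
    have "c \<bullet> (M_of_V n m V *\<^sub>v y) = (\<Sum>l<n. c $ l * (\<Sum>j<m. M_of_V n m V $$ (l, j) * y $ j))"
      using y unfolding c_def M_of_V_def by (simp add: scalar_prod_def lessThan_atLeast0)
    also have "\<dots> = (\<Sum>j<m. \<Sum>l<n. c $ l * M_of_V n m V $$ (l, j) * y $ j)"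
      unfolding sum_distrib_left by (subst sum.swap) (simp add: mult.assoc)
    also have "\<dots> = (\<Sum>j<m. (\<Sum>l<n. c $ l * M_of_V n m V $$ (l, j)) * y $ j)"
      by (simp add: sum_distrib_right)
    also have "\<dots> = (\<Sum>j<m. y $ j)" using cM by simp
    finally show "(\<Sum>j<m. y $ j) = c \<bullet> (M_of_V n m V *\<^sub>v y)" by simp
  qed
qed


theorem lemma4:
  fixes n m :: nat and PXY U S V :: "real mat" and \<Omega> :: "nat set" and J :: "real vec"
  assumes "0 < n" and "n < m"
    and PXY: "PXY \<in> carrier_mat n m" "\<forall>x<n. \<forall>y<m. 0 \<le> PXY $$ (x, y)"
      "(\<Sum>x<n. \<Sum>y<m. PXY $$ (x, y)) = 1"
    and PX_pos: "\<forall>x<n. 0 < marg_X n m PXY $ x"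
    and PY_pos: "\<forall>y<m. 0 < marg_Y n m PXY $ y"
    and rank: "vec_space.rank n (cond_XY n m PXY :: real mat) = n"
    and P1_inv: "invertible_mat (col_sub (cond_XY n m PXY) {..<n})"
    and svd: "is_svd n m (cond_XY n m PXY) U S V"
    and H: "in_H n m PXY (M_of_V n m V)"
    and \<Omega>: "\<Omega> \<subseteq> {..<m}" "card \<Omega> = n" "invertible_mat (col_sub (M_of_V n m V) \<Omega>)"
    and J: "J \<in> carrier_vec n" "(\<Sum>x<n. J $ x) = 0" "(\<Sum>x<n. \<bar>J $ x\<bar>) \<le> 1"
    and extreme: "\<forall>\<^sub>F \<epsilon> in at_right 0.
       extreme_pt
         {y \<in> carrier_vec m.
            M_of_V n m V *\<^sub>v y = M_of_V n m V *\<^sub>v marg_Y n m PXY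
              + \<epsilon> \<cdot>\<^sub>v (M_of_V n m V *\<^sub>v
                   vec m (\<lambda>j. if j < n then (mat_inv (col_sub (cond_XY n m PXY) {..<n}) *\<^sub>v J) $ j else 0))
            \<and> (\<forall>j<m. 0 \<le> y $ j)}
         (embed_on m \<Omega>
            (mat_inv (col_sub (M_of_V n m V) \<Omega>) *\<^sub>v (M_of_V n m V *\<^sub>v marg_Y n m PXY)
             + \<epsilon> \<cdot>\<^sub>v (mat_inv (col_sub (M_of_V n m V) \<Omega>) *\<^sub>v (M_of_V n m V *\<^sub>v
                 vec m (\<lambda>j. if j < n then (mat_inv (col_sub (cond_XY n m PXY) {..<n}) *\<^sub>v J) $ j else 0)))))"
  shows "(\<lambda>\<epsilon>. entropy
            (embed_on m \<Omega>
              (mat_inv (col_sub (M_of_V n m V) \<Omega>) *\<^sub>v (M_of_V n m V *\<^sub>v marg_Y n m PXY)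
               + \<epsilon> \<cdot>\<^sub>v (mat_inv (col_sub (M_of_V n m V) \<Omega>) *\<^sub>v (M_of_V n m V *\<^sub>v
                   vec m (\<lambda>j. if j < n then (mat_inv (col_sub (cond_XY n m PXY) {..<n}) *\<^sub>v J) $ j else 0)))))
          + ((vec n (\<lambda>i. ln ((mat_inv (col_sub (M_of_V n m V) \<Omega>) *\<^sub>v (M_of_V n m V *\<^sub>v marg_Y n m PXY)) $ i)))
               \<bullet> (mat_inv (col_sub (M_of_V n m V) \<Omega>) *\<^sub>v (M_of_V n m V *\<^sub>v marg_Y n m PXY))
             + \<epsilon> * ((vec n (\<lambda>j. vec n (\<lambda>i. ln ((mat_inv (col_sub (M_of_V n m V) \<Omega>) *\<^sub>v (M_of_V n m V *\<^sub>v marg_Y n m PXY)) $ i))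
                         \<bullet> col (mat_inv (col_sub (M_of_V n m V) \<Omega>) * col_sub (M_of_V n m V) {..<n}
                                * mat_inv (col_sub (cond_XY n m PXY) {..<n})) j))
                     \<bullet> J)))
         \<in> o[at_right 0](\<lambda>\<epsilon>. \<epsilon>)"
  proof -
  define C where "C = cond_XY n m PXY"
  define M where "M = M_of_V n m V"
  define P1 where "P1 = col_sub C {..<n}"
  define P1i where "P1i = mat_inv P1"
  define MO where "MO = col_sub M \<Omega>"
  define B where "B = mat_inv MO"
  define PY where "PY = marg_Y n m PXY"
  define w where "w = vec m (\<lambda>j. if j < n then (P1i *\<^sub>v J) $ j else 0)"
  define t0 where "t0 = B *\<^sub>v (M *\<^sub>v PY)"
  define d where "d = B *\<^sub>v (M *\<^sub>v w)"
  define Mn where "Mn = col_sub M {..<n}"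
  note fold = C_def[symmetric] M_def[symmetric] P1_def[symmetric] P1i_def[symmetric] MO_def[symmetric]
    B_def[symmetric] PY_def[symmetric] w_def[symmetric] t0_def[symmetric] d_def[symmetric] Mn_def[symmetric]
  have nm: "n < m" by fact
  have Cc: "C \<in> carrier_mat n m" unfolding C_def cond_XY_def by simp
  have Mc: "M \<in> carrier_mat n m" unfolding M_def M_of_V_def by simp
  have sub_n: "{..<n} \<subseteq> {..<m}" using nm by auto
  have MOc: "MO \<in> carrier_mat n n" unfolding MO_def using col_sub_carrier[OF Mc \<Omega>(1,2)] .
  have Mnc: "Mn \<in> carrier_mat n n" unfolding Mn_def using col_sub_carrier[OF Mc sub_n] by simp
  have P1c: "P1 \<in> carrier_mat n n" unfolding P1_def using col_sub_carrier[OF Cc sub_n] by simp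
  have MOinv: "invertible_mat MO" using \<Omega>(3) unfolding fold .
  have P1inv: "invertible_mat P1" using P1_inv unfolding fold .
  have Bc: "B \<in> carrier_mat n n" unfolding B_def using mat_inv_props(1)[OF MOinv MOc] .
  have P1ic: "P1i \<in> carrier_mat n n" unfolding P1i_def using mat_inv_props(1)[OF P1inv P1c] .
  have P1P1i: "P1 * P1i = 1\<^sub>m n" unfolding P1i_def using mat_inv_props(2)[OF P1inv P1c] .
  have PYc: "PY \<in> carrier_vec m" unfolding PY_def marg_Y_def by simp
  have wc: "w \<in> carrier_vec m" unfolding w_def by simp
  have t0c: "t0 \<in> carrier_vec n" unfolding t0_def using Bc Mc PYc by simp
  have dc: "d \<in> carrier_vec n" unfolding d_def using Bc Mc wc by simp
  have PYj: "PY $ j = (\<Sum>x<n. PXY $$ (x, j))" if "j < m" for j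
    unfolding PY_def marg_Y_def using that by simp
  have colsum: "\<forall>j<m. (\<Sum>i<n. C $$ (i, j)) = 1"
  proof (intro allI impI)
    fix j assume j: "j < m"
    have "(\<Sum>i<n. C $$ (i, j)) = (\<Sum>i<n. PXY $$ (i, j) / PY $ j)"
      unfolding C_def cond_XY_def PY_def using j by simp
    also have "\<dots> = PY $ j / PY $ j" unfolding sum_divide_distrib[symmetric] using PYj[OF j] by simp
    also have "\<dots> = 1"
    proof -
      have "0 < PY $ j" using PY_pos j unfolding PY_def by blast
      then show ?thesis by simp
    qed
    finally show "(\<Sum>i<n. C $$ (i, j)) = 1" .
  qed
  obtain c where cc: "c \<in> carrier_vec n" and cM: "\<And>y. y \<in> carrier_vec m \<Longrightarrow> (\<Sum>j<m. y $ j) = c \<bullet> (M *\<^sub>v y)"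
    using ones_rowspace[OF svd[unfolded fold] nm colsum] unfolding fold by blast
  have sumPY: "(\<Sum>j<m. PY $ j) = 1"
  proof -
    have "(\<Sum>j<m. PY $ j) = (\<Sum>j<m. \<Sum>x<n. PXY $$ (x, j))" using PYj by simp
    also have "\<dots> = (\<Sum>x<n. \<Sum>j<m. PXY $$ (x, j))" by (rule sum.swap)
    finally show ?thesis using PXY(3) by simp
  qed
  have colsumP1: "(\<Sum>x<n. P1 $$ (x, k)) = 1" if "k < n" for k
  proof -
    have "(\<Sum>x<n. P1 $$ (x, k)) = (\<Sum>x<n. C $$ (x, k))"
      unfolding P1_def using col_sub_index[OF Cc sub_n] that pick_lessThan[OF that] by simp
    then show ?thesis using colsum that nm by simp
  qed
  have colsumP1i: "(\<Sum>j<n. P1i $$ (j, k)) = 1" if k: "k < n" for k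
  proof -
    have "(\<Sum>x<n. (1\<^sub>m n :: real mat) $$ (x, k)) = (\<Sum>x<n. (P1 * P1i) $$ (x, k))" using P1P1i by simp
    also have "\<dots> = (\<Sum>x<n. \<Sum>j<n. P1 $$ (x, j) * P1i $$ (j, k))"
      using P1c P1ic k by (intro sum.cong) (auto simp: scalar_prod_def lessThan_atLeast0)
    also have "\<dots> = (\<Sum>j<n. \<Sum>x<n. P1 $$ (x, j) * P1i $$ (j, k))" by (rule sum.swap)
    also have "\<dots> = (\<Sum>j<n. (\<Sum>x<n. P1 $$ (x, j)) * P1i $$ (j, k))" by (simp add: sum_distrib_right)
    also have "\<dots> = (\<Sum>j<n. P1i $$ (j, k))" using colsumP1 by simp
    finally have "(\<Sum>j<n. P1i $$ (j, k)) = (\<Sum>x<n. (1\<^sub>m n :: real mat) $$ (x, k))" by simp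
    also have "\<dots> = (\<Sum>x<n. if x = k then 1 else 0)" using k by (intro sum.cong) auto
    also have "\<dots> = 1" using k by simp
    finally show ?thesis .
  qed
  have sumw: "(\<Sum>j<m. w $ j) = 0"
  proof -
    have "(\<Sum>j<m. w $ j) = (\<Sum>j<m. if j < n then (P1i *\<^sub>v J) $ j else 0)" unfolding w_def by simp
    also have "\<dots> = (\<Sum>j\<in>{..<m} \<inter> {j. j < n}. (P1i *\<^sub>v J) $ j)" by (simp add: sum.inter_restrict)
    also have "{..<m} \<inter> {j. j < n} = {..<n}" using nm by auto
    also have "(\<Sum>j<n. (P1i *\<^sub>v J) $ j) = (\<Sum>j<n. \<Sum>k<n. P1i $$ (j, k) * J $ k)"
      using P1ic J(1) by (intro sum.cong) (auto simp: scalar_prod_def lessThan_atLeast0)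
    also have "\<dots> = (\<Sum>k<n. \<Sum>j<n. P1i $$ (j, k) * J $ k)" by (rule sum.swap)
    also have "\<dots> = (\<Sum>k<n. (\<Sum>j<n. P1i $$ (j, k)) * J $ k)" by (simp add: sum_distrib_right)
    also have "\<dots> = (\<Sum>k<n. J $ k)" using colsumP1i by simp
    finally show ?thesis using J(2) by simp
  qed
  have ext: "\<forall>\<^sub>F \<epsilon> in at_right 0. (\<forall>i<n. 0 \<le> t0 $ i + \<epsilon> * d $ i) \<and> (\<Sum>i<n. t0 $ i + \<epsilon> * d $ i) = 1"
    using extreme[unfolded fold]
  proof eventually_elim
    case (elim \<epsilon>)
    define y where "y = embed_on m \<Omega> (t0 + \<epsilon> \<cdot>\<^sub>v d)"
    have y: "y \<in> carrier_vec m" "M *\<^sub>v y = M *\<^sub>v PY + \<epsilon> \<cdot>\<^sub>v (M *\<^sub>v w)" "\<forall>j<m. 0 \<le> y $ j"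
      using elim unfolding extreme_pt_def y_def by auto
    have yi: "y $ pick \<Omega> i = t0 $ i + \<epsilon> * d $ i" if "i < n" for i
      unfolding y_def using embed_pick(1)[OF \<Omega>(1,2) that] that t0c dc by simp
    have "\<forall>i<n. 0 \<le> t0 $ i + \<epsilon> * d $ i"
    proof (intro allI impI)
      fix i assume i: "i < n"
      have "0 \<le> y $ pick \<Omega> i" using y(3) embed_pick(2)[OF \<Omega>(1,2) i] by blast
      then show "0 \<le> t0 $ i + \<epsilon> * d $ i" using yi[OF i] by simp
    qed
    moreover have "(\<Sum>i<n. t0 $ i + \<epsilon> * d $ i) = 1"
    proof -
      have "(\<Sum>i<n. t0 $ i + \<epsilon> * d $ i) = (\<Sum>i<n. (t0 + \<epsilon> \<cdot>\<^sub>v d) $ i)"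
        using t0c dc by (intro sum.cong) auto
      also have "\<dots> = (\<Sum>j<m. y $ j)" unfolding y_def by (rule sum_embed_vec[OF \<Omega>(1,2), symmetric])
      also have "\<dots> = c \<bullet> (M *\<^sub>v PY + \<epsilon> \<cdot>\<^sub>v (M *\<^sub>v w))" using cM[OF y(1)] y(2) by simp
      also have "\<dots> = c \<bullet> (M *\<^sub>v PY) + \<epsilon> * (c \<bullet> (M *\<^sub>v w))"
        using cc Mc PYc wc by (simp add: scalar_prod_add_distrib[of _ n])
      also have "\<dots> = 1" using cM[OF PYc] cM[OF wc] sumPY sumw by simp
      finally show ?thesis .
    qed
    ultimately show ?case by blast
  qed
  have t0nn: "0 \<le> t0 $ i" if i: "i < n" for i
  proof (rule tendsto_lowerbound)
    show "((\<lambda>\<epsilon>. t0 $ i + \<epsilon> * d $ i) \<longlongrightarrow> t0 $ i) (at_right (0::real))"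
    proof -
      have "((\<lambda>\<epsilon>. t0 $ i + \<epsilon> * d $ i) \<longlongrightarrow> t0 $ i + 0 * d $ i) (at_right (0::real))"
        by (intro tendsto_intros)
      then show ?thesis by simp
    qed
    show "\<forall>\<^sub>F \<epsilon> in at_right 0. 0 \<le> t0 $ i + \<epsilon> * d $ i" using ext i by (auto elim: eventually_mono)
  qed simp
  have lim_sum: "((\<lambda>\<epsilon>. (\<Sum>i<n. t0 $ i + \<epsilon> * d $ i)) \<longlongrightarrow> (\<Sum>i<n. t0 $ i + 0 * d $ i)) (at_right (0::real))"
    by (intro tendsto_intros)
  have "((\<lambda>\<epsilon>. (\<Sum>i<n. t0 $ i + \<epsilon> * d $ i)) \<longlongrightarrow> 1) (at_right (0::real))"
    by (rule Lim_transform_eventually[OF tendsto_const]) (use ext in \<open>auto elim: eventually_mono\<close>)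
  from tendsto_unique[OF trivial_limit_at_right_real lim_sum this]
  have sumt0: "(\<Sum>i<n. t0 $ i) = 1" by simp
  have sumd: "(\<Sum>i<n. d $ i) = 0"
  proof -
    have "\<forall>\<^sub>F \<epsilon> in at_right (0::real). 0 < \<epsilon> \<and> (\<Sum>i<n. t0 $ i + \<epsilon> * d $ i) = 1"
      using ext eventually_at_right_less[of 0] by eventually_elim auto
    then obtain \<epsilon> :: real where e: "0 < \<epsilon>" "(\<Sum>i<n. t0 $ i + \<epsilon> * d $ i) = 1"
      using eventually_happens'[OF trivial_limit_at_right_real] by blast
    then have "(\<Sum>i<n. t0 $ i) + \<epsilon> * (\<Sum>i<n. d $ i) = 1" by (simp add: sum.distrib sum_distrib_left)
    then show ?thesis using sumt0 e(1) by simp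
  qed
  have simplex: "in_simplex n t0" unfolding in_simplex_def using t0c t0nn sumt0 by auto
  have h1: "\<forall>\<Omega>'. \<Omega>' \<subseteq> {..<m} \<and> card \<Omega>' = n \<and> invertible_mat (col_sub M \<Omega>') \<longrightarrow>
        (let t = mat_inv (col_sub M \<Omega>') *\<^sub>v (M *\<^sub>v PY) in in_simplex n t \<longrightarrow> (\<forall>i<n. 0 < t $ i))"
    using H unfolding in_H_def M_def PY_def .
  have h2: "in_simplex n t0 \<longrightarrow> (\<forall>i<n. 0 < t0 $ i)"
    using spec[OF h1, of \<Omega>] \<Omega>(1,2) \<Omega>(3)[folded M_def] unfolding t0_def B_def MO_def Let_def by simp
  have t0pos: "\<forall>i<n. 0 < t0 $ i" using h2 simplex by blast
  have core': "(\<lambda>\<epsilon>. entropy (embed_on m \<Omega> (t0 + \<epsilon> \<cdot>\<^sub>v d))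
      + (vec n (\<lambda>i. ln (t0 $ i)) \<bullet> t0 + \<epsilon> * (vec n (\<lambda>i. ln (t0 $ i)) \<bullet> d))) \<in> o[at_right 0](\<lambda>\<epsilon>. \<epsilon>)"
    by (rule core[OF t0c dc t0pos sumd \<Omega>(1,2)])
  define L where "L = vec n (\<lambda>i. ln (t0 $ i))"
  have Lc: "L \<in> carrier_vec n" unfolding L_def by simp
  have Mw: "M *\<^sub>v w = Mn *\<^sub>v (P1i *\<^sub>v J)"
  proof (rule eq_vecI)
    show "dim_vec (M *\<^sub>v w) = dim_vec (Mn *\<^sub>v (P1i *\<^sub>v J))" using Mc Mnc by simp
    fix k assume "k < dim_vec (Mn *\<^sub>v (P1i *\<^sub>v J))"
    then have k: "k < n" using Mnc by simp
    have "(M *\<^sub>v w) $ k = (\<Sum>j<m. M $$ (k, j) * w $ j)"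
      using Mc wc k by (auto simp: scalar_prod_def lessThan_atLeast0)
    also have "\<dots> = (\<Sum>j<m. if j < n then M $$ (k, j) * (P1i *\<^sub>v J) $ j else 0)"
      unfolding w_def by (intro sum.cong) auto
    also have "\<dots> = (\<Sum>j\<in>{..<m} \<inter> {j. j < n}. M $$ (k, j) * (P1i *\<^sub>v J) $ j)" by (simp add: sum.inter_restrict)
    also have "{..<m} \<inter> {j. j < n} = {..<n}" using nm by auto
    also have "(\<Sum>j<n. M $$ (k, j) * (P1i *\<^sub>v J) $ j) = (\<Sum>j<n. Mn $$ (k, j) * (P1i *\<^sub>v J) $ j)"
      unfolding Mn_def using col_sub_index[OF Mc sub_n] k pick_lessThan by (intro sum.cong) auto
    also have "\<dots> = (Mn *\<^sub>v (P1i *\<^sub>v J)) $ k"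
      using Mnc P1ic J(1) k by (auto simp: scalar_prod_def lessThan_atLeast0)
    finally show "(M *\<^sub>v w) $ k = (Mn *\<^sub>v (P1i *\<^sub>v J)) $ k" .
  qed
  have dA: "d = (B * Mn * P1i) *\<^sub>v J"
  proof -
    have BMc: "B * Mn \<in> carrier_mat n n" using Bc Mnc by simp
    have "(B * Mn * P1i) *\<^sub>v J = (B * Mn) *\<^sub>v (P1i *\<^sub>v J)"
      by (rule assoc_mult_mat_vec[OF BMc P1ic J(1)])
    also have "\<dots> = B *\<^sub>v (Mn *\<^sub>v (P1i *\<^sub>v J))"
      using Bc Mnc P1ic J(1) by (intro assoc_mult_mat_vec[of _ n n _ n]) auto
    finally show ?thesis unfolding d_def Mw by simp
  qed
  have key: "vec n (\<lambda>j. L \<bullet> col (B * Mn * P1i) j) \<bullet> J = L \<bullet> d"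
  proof -
    have Ac: "B * Mn * P1i \<in> carrier_mat n n" using Bc Mnc P1ic by simp
    have "vec n (\<lambda>j. L \<bullet> col (B * Mn * P1i) j) \<bullet> J = L \<bullet> vec n (\<lambda>i. row (B * Mn * P1i) i \<bullet> J)"
      by (rule assoc_scalar_prod[OF Lc Ac J(1)])
    also have "vec n (\<lambda>i. row (B * Mn * P1i) i \<bullet> J) = (B * Mn * P1i) *\<^sub>v J"
      unfolding mult_mat_vec_def using Ac Bc by simp
    finally show ?thesis using dA by simp
  qed
  show ?thesis
    unfolding fold using core' key unfolding L_def by simp
qed

end
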